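(* Let $A\subset\mathbb{R}^n$ with $0\in\overline{A}$, and let $\phi:(\mathbb{R}^n,0)\to(\mathbb{R}^n,0)$ be a bi-Lipschitz homeomorphism with constants $0<K_1\le K_2$, i.e. $K_1|x_1-x_2|\le|\phi(x_1)-\phi(x_2)|\le K_2|x_1-x_2|$ near $0$. Then for $d>0$ and $K>0$, $$ST_d\Big(\phi(A);\frac{KK_1}{K_2^d}\Big)\subset\phi(ST_d(A;K))\subset ST_d\Big(\phi(A);\frac{KK_2}{K_1^d}\Big)$$ in a small neighbourhood of $0\in\mathbb{R}^n$.
   Context: Sea-tangle neighbourhood of degree $d>0$ and width $C>0$: $ST_d(X;C)=\{x\in\mathbb{R}^n : \mathrm{dist}(x,X)\le C|x|^d\}$. *)

theory Defs
  imports "HOL-Analysis.Analysis"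
begin

definition sea_tangle :: "real \<Rightarrow> ('a::euclidean_space) set \<Rightarrow> real \<Rightarrow> 'a set" where
  "sea_tangle d X C = {x. infdist x X \<le> C * norm x powr d}"

end

theory Submission
  imports Defs
begin

lemma infdist_approx:
  fixes x :: "'a::metric_space"
  assumes "A \<noteq> {}" "e > 0"
  obtains a where "a \<in> A" "dist x a < infdist x A + e"
proof -
  have "infdist x A < infdist x A + e" using assms by simp
  then have "(INF a\<in>A. dist x a) < infdist x A + e" using infdist_notempty[OF assms(1)] by simp
  then obtain a where "a \<in> A" "dist x a < infdist x A + e"
    using cINF_less_iff[OF assms(1) bdd_below_image_dist[of x A]] by blast
  then show ?thesis using that by blast
qed

lemma infdist_transfer:
  fixes x :: "'a::metric_space" and y :: "'b::metric_space"
  assumes "A \<noteq> {}" "\<And>a. a \<in> A \<Longrightarrow> dist x a < R \<Longrightarrow> dist y (f a) \<le> L * dist x a"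
    "infdist x A < R" "L \<ge> 0"
  shows "infdist y (f ` A) \<le> L * infdist x A"
proof (rule field_le_epsilon)
  fix e :: real assume e: "e > 0"
  define e' where "e' = min (e / (L+1)) (R - infdist x A)"
  have e': "e' > 0" using e assms(3,4) by (simp add: e'_def)
  obtain a where a: "a \<in> A" "dist x a < infdist x A + e'" using infdist_approx[OF assms(1) e'] by blast
  have "dist x a < R" using a(2) e'_def by simp
  then have "dist y (f a) \<le> L * dist x a" using assms(2) a(1) by blast
  also have "\<dots> \<le> L * (infdist x A + e')" using a(2) assms(4) by (intro mult_left_mono) auto
  also have "\<dots> \<le> L * infdist x A + e"
  proof -
    have "L * e' \<le> L * (e/(L+1))" using assms(4) by (intro mult_left_mono) (auto simp: e'_def)
    also have "\<dots> \<le> e" using e assms(4) by (simp add: field_simps)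
    finally show ?thesis by (simp add: distrib_left)
  qed
  finally show "infdist y (f ` A) \<le> L * infdist x A + e"
    using infdist_le[of "f a" "f ` A" y] a(1) by simp
qed

theorem lemma4p4:
  fixes A :: "'a::euclidean_space set" and \<phi> \<psi> :: "'a \<Rightarrow> 'a"
    and K1 K2 d K r :: real
  assumes "0 \<in> closure A"
    and "homeomorphism UNIV UNIV \<phi> \<psi>"
    and "\<phi> 0 = 0"
    and "0 < K1" and "K1 \<le> K2"
    and "0 < r"
    and "\<And>x1 x2. x1 \<in> ball 0 r \<Longrightarrow> x2 \<in> ball 0 r \<Longrightarrow>
            K1 * norm (x1 - x2) \<le> norm (\<phi> x1 - \<phi> x2) \<and> norm (\<phi> x1 - \<phi> x2) \<le> K2 * norm (x1 - x2)"
    and "0 < d" and "0 < K"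
  shows "\<exists>\<epsilon>>0.
           sea_tangle d (\<phi> ` A) (K * K1 / K2 powr d) \<inter> ball 0 \<epsilon> \<subseteq> \<phi> ` sea_tangle d A K \<and>
           \<phi> ` sea_tangle d A K \<inter> ball 0 \<epsilon> \<subseteq> sea_tangle d (\<phi> ` A) (K * K2 / K1 powr d)"
proof -
  note H = assms(2)[unfolded homeomorphism_def]
  have pp: "\<And>x. \<psi> (\<phi> x) = x" and qq: "\<And>y. \<phi> (\<psi> y) = y" using H by auto
  have psi0: "\<psi> 0 = 0" using pp[of 0] assms(3) by simp
  have cpsi: "continuous_on UNIV \<psi>" and cphi: "continuous_on UNIV \<phi>" using H by auto
  have "isCont \<psi> 0" using cpsi by (simp add: continuous_on_eq_continuous_at)
  then obtain \<delta> where \<delta>: "\<delta> > 0" "\<And>z. dist z 0 < \<delta> \<Longrightarrow> dist (\<psi> z) (\<psi> 0) < r/3"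
    using assms(6) unfolding continuous_at_eps_delta by (metis divide_pos_pos zero_less_numeral)
  have small: "norm (\<psi> z) < r/3" if "norm z < \<delta>" for z using \<delta>(2)[of z] that psi0 by simp
  define \<epsilon> where "\<epsilon> = \<delta>/2"
  have Ane: "A \<noteq> {}" using assms(1) by auto
  have K2pos: "K2 > 0" using assms(4,5) by simp
  have lip: "K1 * norm (x1 - x2) \<le> norm (\<phi> x1 - \<phi> x2)" "norm (\<phi> x1 - \<phi> x2) \<le> K2 * norm (x1 - x2)"
    if "norm x1 < r" "norm x2 < r" for x1 x2 using assms(7)[of x1 x2] that by auto
  have inf0: "infdist x S \<le> norm x" if "0 \<in> closure S" "S \<noteq> {}" for x :: 'a and S
    using infdist_triangle[of x S 0] in_closure_iff_infdist_zero[OF that(2)] that(1) by (simp add: dist_norm)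
  have cl2: "0 \<in> closure (\<phi> ` A)"
  proof -
    have "\<phi> ` closure A \<subseteq> closure (\<phi> ` A)"
      using cphi by (meson continuous_on_subset image_closure_subset closed_closure closure_subset subset_UNIV)
    then show ?thesis using assms(1,3) by force
  qed
  have part1: "sea_tangle d (\<phi> ` A) (K * K1 / K2 powr d) \<inter> ball 0 \<epsilon> \<subseteq> \<phi> ` sea_tangle d A K"
  proof
    fix y assume y: "y \<in> sea_tangle d (\<phi> ` A) (K * K1 / K2 powr d) \<inter> ball 0 \<epsilon>"
    have ny: "norm y < \<epsilon>" using y by simp
    have hy: "infdist y (\<phi> ` A) \<le> K * K1 / K2 powr d * norm y powr d" using y by (simp add: sea_tangle_def)
    have nx: "norm (\<psi> y) < r/3" using small[of y] ny \<delta> by (simp add: \<epsilon>_def)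
    have "infdist (\<psi> y) (\<psi> ` \<phi> ` A) \<le> (1/K1) * infdist y (\<phi> ` A)"
    proof (rule infdist_transfer[where R=\<epsilon>])
      show "\<phi> ` A \<noteq> {}" using Ane by simp
      show "infdist y (\<phi> ` A) < \<epsilon>" using inf0[OF cl2, of y] Ane ny by force
      show "0 \<le> 1/K1" using assms(4) by simp
      fix b assume b: "b \<in> \<phi> ` A" "dist y b < \<epsilon>"
      have "norm b < \<delta>" using b(2) ny norm_triangle_ineq[of y "b - y"]
        by (simp add: \<epsilon>_def dist_norm norm_minus_commute)
      then have "norm (\<psi> b) < r/3" by (rule small)
      then have "K1 * norm (\<psi> y - \<psi> b) \<le> norm (y - b)" using lip(1)[of "\<psi> y" "\<psi> b"] nx assms(6) qq by simp
      then show "dist (\<psi> y) (\<psi> b) \<le> 1 / K1 * dist y b" using assms(4) by (simp add: dist_norm field_simps)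
    qed
    also have "\<psi> ` \<phi> ` A = A" using pp by (simp add: image_comp)
    finally have i1: "infdist (\<psi> y) A \<le> (1/K1) * infdist y (\<phi> ` A)" .
    have nyx: "norm y \<le> K2 * norm (\<psi> y)" using lip(2)[of "\<psi> y" 0] nx assms(6) qq assms(3) psi0 by simp
    have "infdist (\<psi> y) A \<le> (1/K1) * (K * K1 / K2 powr d * norm y powr d)"
      using i1 hy assms(4) by (smt (verit) mult_left_mono divide_nonneg_nonneg zero_le_one)
    also have "\<dots> = K * (norm y powr d / K2 powr d)" using assms(4) by simp
    also have "\<dots> \<le> K * ((K2 * norm (\<psi> y)) powr d / K2 powr d)"
      using nyx assms(8,9) K2pos by (intro mult_left_mono divide_right_mono powr_mono2) auto
    also have "\<dots> = K * norm (\<psi> y) powr d" using K2pos by (simp add: powr_mult)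
    finally have "\<psi> y \<in> sea_tangle d A K" by (simp add: sea_tangle_def)
    then show "y \<in> \<phi> ` sea_tangle d A K" using qq[of y] by (metis imageI)
  qed
  have part2: "\<phi> ` sea_tangle d A K \<inter> ball 0 \<epsilon> \<subseteq> sea_tangle d (\<phi> ` A) (K * K2 / K1 powr d)"
  proof
    fix y assume "y \<in> \<phi> ` sea_tangle d A K \<inter> ball 0 \<epsilon>"
    then obtain x where x: "x \<in> sea_tangle d A K" "y = \<phi> x" and ny: "norm y < \<epsilon>" by auto
    have hx: "infdist x A \<le> K * norm x powr d" using x by (simp add: sea_tangle_def)
    have nx: "norm x < r/3" using small[of y] ny \<delta> x(2) pp by (simp add: \<epsilon>_def)
    have "infdist y (\<phi> ` A) \<le> K2 * infdist x A"
      unfolding x(2)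
    proof (rule infdist_transfer[where R="r/3"])
      show "A \<noteq> {}" by (rule Ane)
      show "infdist x A < r/3" using inf0[OF assms(1) Ane, of x] nx by simp
      show "0 \<le> K2" using K2pos by simp
      fix a assume a: "a \<in> A" "dist x a < r/3"
      have "norm a < r" using a(2) nx norm_triangle_ineq[of x "a - x"]
        using assms(6) by (simp add: dist_norm norm_minus_commute)
      moreover have "norm x < r" using nx norm_ge_zero[of x] by linarith
      ultimately show "dist (\<phi> x) (\<phi> a) \<le> K2 * dist x a" using lip(2)[of x a] by (simp add: dist_norm)
    qed
    also have "\<dots> \<le> K2 * (K * norm x powr d)" using hx K2pos by simp
    also have "\<dots> \<le> K2 * (K * (norm y / K1) powr d)"
    proof -
      have "K1 * norm x \<le> norm y" using lip(1)[of x 0] nx assms(3,6) x(2) by simp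
      then have "norm x \<le> norm y / K1" using assms(4) by (simp add: field_simps)
      then show ?thesis using K2pos assms(8,9) by (intro mult_left_mono powr_mono2) auto
    qed
    also have "\<dots> = K * K2 / K1 powr d * norm y powr d" using assms(4) by (simp add: powr_divide)
    finally show "y \<in> sea_tangle d (\<phi> ` A) (K * K2 / K1 powr d)" by (simp add: sea_tangle_def)
  qed
  show ?thesis using part1 part2 \<delta>(1) by (intro exI[of _ \<epsilon>]) (simp add: \<epsilon>_def)
qed

end
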